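(* Let $\Omega$ be a Polish space, $\mathcal{Q}$ a nonempty convex subset of $\mathfrak{P}(\Omega)$, and $Y:\Omega\to\mathbb{R}^d$ a universally measurable random variable. Assume that the one-period condition $NA(\mathcal{Q})$ holds. Then there exists $\hat p\in\mathcal{Q}$ such that $0\in\mathrm{Ri}\bigl(\mathrm{Conv}(E(\hat p))\bigr)$ and $\mathrm{Aff}(E(\hat p))=\mathrm{Aff}(D)$.
   Context: $\mathfrak{P}(\Omega)$ is the set of Borel probability measures on $\Omega$, each identified with its extension to the universally measurable sets. For $p\in\mathcal{Q}$, $E(p)$ is the intersection of all closed sets $A\subseteq\mathbb{R}^d$ with $p[Y\in A]=1$, and $D$ is the intersection of all closed sets $A\subseteq\mathbb{R}^d$ with $q[Y\in A]=1$ for all $q\in\mathcal{Q}$. A property holds $\mathcal{Q}$-quasi-surely if it holds outside a universally measurable set that is $q$-null for every $q\in\mathcal{Q}$. $NA(\mathcal{Q})$: for every $h\in\mathbb{R}^d$, $h\cdot Y\ge0$ $\mathcal{Q}$-q.s. implies $h\cdot Y=0$ $\mathcal{Q}$-q.s. $\mathrm{Aff}$, $\mathrm{Conv}$ denote affine and convex hulls, and $\mathrm{Ri}$ the relative interior. *)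

theory Defs
  imports "HOL-Probability.Probability"
begin

definition borel_probs :: "'a::topological_space measure set" where
  "borel_probs = {M. sets M = sets (borel :: 'a measure) \<and> prob_space M}"

definition univ_measurable_sets :: "'a::topological_space set set" where
  "univ_measurable_sets = {A. \<forall>p\<in>borel_probs. A \<in> sets (completion p)}"

definition univ_measurable_fun :: "('a::topological_space \<Rightarrow> 'b::topological_space) \<Rightarrow> bool" where
  "univ_measurable_fun Y \<longleftrightarrow> (\<forall>B\<in>sets (borel :: 'b measure). Y -` B \<in> univ_measurable_sets)"

text \<open>Value of (the extension to universally measurable sets of) p.\<close>
definition uprob :: "'a::topological_space measure \<Rightarrow> 'a set \<Rightarrow> real" where
  "uprob p A = measure (completion p) A"

definition convex_measures :: "'a::topological_space measure set \<Rightarrow> bool" where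
  "convex_measures Q \<longleftrightarrow> (\<forall>p\<in>Q. \<forall>q\<in>Q. \<forall>t::real. 0 \<le> t \<and> t \<le> 1 \<longrightarrow>
     (\<exists>r\<in>Q. \<forall>A\<in>sets (borel :: 'a measure).
        measure r A = t * measure p A + (1 - t) * measure q A))"

definition quasi_surely :: "'a::topological_space measure set \<Rightarrow> ('a \<Rightarrow> bool) \<Rightarrow> bool" where
  "quasi_surely Q P \<longleftrightarrow> (\<exists>N\<in>univ_measurable_sets. (\<forall>q\<in>Q. uprob q N = 0) \<and>
      (\<forall>\<omega>. \<omega> \<notin> N \<longrightarrow> P \<omega>))"

definition supp_E :: "('a::topological_space \<Rightarrow> 'b::topological_space) \<Rightarrow> 'a measure \<Rightarrow> 'b set" where
  "supp_E Y p = \<Inter>{A. closed A \<and> uprob p (Y -` A) = 1}"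

definition supp_D :: "('a::topological_space \<Rightarrow> 'b::topological_space) \<Rightarrow> 'a measure set \<Rightarrow> 'b set" where
  "supp_D Y Q = \<Inter>{A. closed A \<and> (\<forall>q\<in>Q. uprob q (Y -` A) = 1)}"

definition NA :: "'a::topological_space measure set \<Rightarrow> ('a \<Rightarrow> 'b::euclidean_space) \<Rightarrow> bool" where
  "NA Q Y \<longleftrightarrow> (\<forall>h::'b. quasi_surely Q (\<lambda>\<omega>. h \<bullet> Y \<omega> \<ge> 0) \<longrightarrow>
                       quasi_surely Q (\<lambda>\<omega>. h \<bullet> Y \<omega> = 0))"

end

theory Submission
  imports Defs
begin


lemma bp_space: "p \<in> borel_probs \<Longrightarrow> space p = UNIV"
  unfolding borel_probs_def by (auto dest: sets_eq_imp_space_eq)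

lemma bp_prob: "p \<in> borel_probs \<Longrightarrow> prob_space p"
  unfolding borel_probs_def by auto

lemma bp_completion_prob: "p \<in> borel_probs \<Longrightarrow> prob_space (completion p)"
proof -
  assume p: "p \<in> borel_probs"
  then interpret prob_space p by (rule bp_prob)
  show ?thesis by (rule prob_spaceI) (simp add: emeasure_space_1)
qed

lemma um_pre: "univ_measurable_fun Y \<Longrightarrow> closed A \<Longrightarrow> p \<in> borel_probs \<Longrightarrow> Y -` A \<in> sets (completion p)"
  unfolding univ_measurable_fun_def univ_measurable_sets_def by auto

lemma um_pre_open: "univ_measurable_fun Y \<Longrightarrow> open A \<Longrightarrow> p \<in> borel_probs \<Longrightarrow> Y -` A \<in> sets (completion p)"
  unfolding univ_measurable_fun_def univ_measurable_sets_def by auto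

lemma uprob0: "p \<in> borel_probs \<Longrightarrow> X \<in> sets (completion p) \<Longrightarrow>
   uprob p X = 0 \<longleftrightarrow> X \<in> null_sets (completion p)"
proof -
  assume p: "p \<in> borel_probs" and X: "X \<in> sets (completion p)"
  interpret c: prob_space "completion p" using bp_completion_prob[OF p] .
  show ?thesis unfolding uprob_def using X by (auto simp: c.emeasure_eq_measure null_sets_def)
qed

lemma uprob1: "p \<in> borel_probs \<Longrightarrow> univ_measurable_fun Y \<Longrightarrow> closed A \<Longrightarrow>
   uprob p (Y -` A) = 1 \<longleftrightarrow> Y -` (- A) \<in> null_sets (completion p)"
proof -
  assume p: "p \<in> borel_probs" and Y: "univ_measurable_fun Y" and A: "closed A"
  interpret c: prob_space "completion p" using bp_completion_prob[OF p] .
  have m: "Y -` A \<in> sets (completion p)" using um_pre[OF Y A p] .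
  have e: "Y -` (- A) = space (completion p) - Y -` A" using bp_space[OF p] by auto
  have m2: "Y -` (- A) \<in> sets (completion p)" using m e by auto
  have "uprob p (Y -` (-A)) = 1 - uprob p (Y -` A)"
    unfolding uprob_def e using c.prob_compl[OF m] by simp
  then show ?thesis using uprob0[OF p m2] by auto
qed

lemma memE: "x \<in> supp_E Y p \<longleftrightarrow> (\<forall>A. closed A \<and> uprob p (Y -` A) = 1 \<longrightarrow> x \<in> A)"
  unfolding supp_E_def by auto

lemma full_supp:
  fixes Y :: "'a::topological_space \<Rightarrow> 'b::euclidean_space"
  assumes p: "p \<in> borel_probs" and Y: "univ_measurable_fun Y"
  shows "Y -` (- supp_E Y p) \<in> null_sets (completion p)"
proof -
  define F where "F = {- A | A. closed A \<and> uprob p (Y -` A) = 1}"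
  have o: "\<And>S. S \<in> F \<Longrightarrow> open S" unfolding F_def by auto
  obtain F' where F': "F' \<subseteq> F" "countable F'" "\<Union>F' = \<Union>F" using Lindelof[OF o] by blast
  have eq: "- supp_E Y p = \<Union>F" unfolding F_def supp_E_def by auto
  have "Y -` (\<Union>F') = (\<Union>U\<in>F'. Y -` U)" by auto
  also have "\<dots> \<in> null_sets (completion p)"
  proof (rule null_sets_UN'[OF F'(2)])
    fix U assume "U \<in> F'"
    then obtain A where "U = - A" "closed A" "uprob p (Y -` A) = 1" using F'(1) unfolding F_def by auto
    then show "Y -` U \<in> null_sets (completion p)" using uprob1[OF p Y] by auto
  qed
  finally show ?thesis using eq F'(3) by simp
qed

lemma supp_nonempty:
  fixes Y :: "'a::topological_space \<Rightarrow> 'b::euclidean_space"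
  assumes p: "p \<in> borel_probs" and Y: "univ_measurable_fun Y"
  shows "supp_E Y p \<noteq> {}"
proof
  assume "supp_E Y p = {}"
  then have "UNIV \<in> null_sets (completion p)" using full_supp[OF p Y] by simp
  moreover interpret c: prob_space "completion p" using bp_completion_prob[OF p] .
  have "space (completion p) = UNIV" using bp_space[OF p] by simp
  ultimately show False using c.emeasure_space_1 by (auto simp: null_sets_def)
qed

lemma mix_supp:
  assumes p: "p \<in> borel_probs" and r: "r \<in> borel_probs" and Y: "univ_measurable_fun Y"
    and q: "q \<in> borel_probs"
    and mix: "\<forall>A\<in>sets borel. measure r A = t * measure p A + (1 - t) * measure q A"
    and t: "0 < t" "t \<le> 1"
  shows "supp_E Y p \<subseteq> supp_E Y r"
proof
  fix x assume x: "x \<in> supp_E Y p"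
  show "x \<in> supp_E Y r" unfolding memE
  proof safe
    fix A assume A: "closed A" "uprob r (Y -` A) = 1"
    then have "Y -` (-A) \<in> null_sets (completion r)" using uprob1[OF r Y] by auto
    then obtain N where N: "N \<in> null_sets r" "Y -` (-A) \<subseteq> N" unfolding null_sets_completion_iff2 by auto
    have Nb: "N \<in> sets borel" "N \<in> sets p" "N \<in> sets q" using N(1) r p q unfolding borel_probs_def by auto
    have "measure r N = 0" using N(1) by (auto simp: measure_def null_sets_def)
    then have "t * measure p N + (1 - t) * measure q N = 0" using mix Nb by auto
    moreover have "measure p N \<ge> 0" "measure q N \<ge> 0" by auto
    ultimately have "measure p N = 0"
      using t by (smt (verit) mult_nonneg_nonneg mult_pos_pos zero_less_measure_iff)
    then have "N \<in> null_sets p"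
      using Nb bp_prob[OF p] finite_measure.emeasure_eq_measure[of p N] by (simp add: prob_space_def null_sets_def)
    then have "Y -` (-A) \<in> null_sets (completion p)" using N(2) unfolding null_sets_completion_iff2 by auto
    then have "uprob p (Y -` A) = 1" using uprob1[OF p Y A(1)] by auto
    then show "x \<in> A" using x A(1) unfolding memE by auto
  qed
qed



lemma G1:
  fixes C :: "'a::euclidean_space set"
  assumes C: "convex C" "C \<noteq> {}"
    and P: "\<And>h. (\<forall>x\<in>C. 0 \<le> h \<bullet> x) \<Longrightarrow> (\<forall>x\<in>C. h \<bullet> x = 0)"
  shows "0 \<in> rel_interior C"
proof (rule ccontr)
  assume n: "0 \<notin> rel_interior C"
  have ri: "convex (rel_interior C)" "rel_interior C \<noteq> {}"
    using C by (auto simp: convex_rel_interior rel_interior_eq_empty)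
  obtain a where a: "a \<in> span (rel_interior C)" "a \<noteq> 0" "\<And>x. x \<in> rel_interior C \<Longrightarrow> 0 \<le> a \<bullet> x"
    using separating_hyperplane_set_0_inspan[OF ri n] by blast
  have "closure (rel_interior C) \<subseteq> {x. 0 \<le> a \<bullet> x}"
    using a(3) by (intro closure_minimal) (auto intro: closed_halfspace_ge[of 0 a, simplified])
  then have "C \<subseteq> {x. 0 \<le> a \<bullet> x}"
    using convex_closure_rel_interior[OF C(1)] closure_subset by blast
  then have "\<forall>x\<in>C. a \<bullet> x = 0" using P by auto
  then have "span C \<subseteq> {x. a \<bullet> x = 0}" by (intro span_minimal) (auto simp: subspace_hyperplane)
  moreover have "span (rel_interior C) \<subseteq> span C" by (intro span_mono rel_interior_subset)
  ultimately have "a \<bullet> a = 0" using a(1) by auto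
  then show False using a(2) by simp
qed

lemma finite_mix:
  assumes Q: "Q \<subseteq> borel_probs" "convex_measures Q" and Y: "univ_measurable_fun Y"
  shows "finite T \<Longrightarrow> T \<noteq> {} \<Longrightarrow> (\<forall>t\<in>T. \<exists>q\<in>Q. t \<in> supp_E Y q) \<Longrightarrow> \<exists>p\<in>Q. T \<subseteq> supp_E Y p"
proof (induction T rule: finite_ne_induct)
  case (singleton x)
  then show ?case by auto
next
  case (insert x F)
  then obtain p where p: "p \<in> Q" "F \<subseteq> supp_E Y p" by auto
  obtain q where q: "q \<in> Q" "x \<in> supp_E Y q" using insert by auto
  obtain r where r: "r \<in> Q" "\<forall>A\<in>sets borel. measure r A = (1/2) * measure p A + (1 - 1/2) * measure q A"
    proof -
    have h: "0 \<le> (1/2::real) \<and> (1/2::real) \<le> 1" by simp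
    show ?thesis using that Q(2) p(1) q(1) h unfolding convex_measures_def by blast
  qed
  have r': "\<forall>A\<in>sets borel. measure r A = (1/2) * measure q A + (1 - 1/2) * measure p A"
    using r(2) by auto
  have "supp_E Y p \<subseteq> supp_E Y r"
    by (rule mix_supp[OF _ _ Y _ r(2)]) (use p q r Q in auto)
  moreover have "supp_E Y q \<subseteq> supp_E Y r"
    by (rule mix_supp[OF _ _ Y _ r']) (use p q r Q in auto)
  ultimately show ?case using p q r by blast
qed



lemma aux_norm:
  fixes b :: "'a::real_normed_vector"
  assumes e: "e > 0"
  shows "norm (- ((e / (2 * (norm b + 1))) *\<^sub>R b)) < e"
proof -
  have nb: "0 \<le> norm b" by simp
  have d: "2 * (norm b + 1) > (0::real)" using nb by (simp add: add_nonneg_pos)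
  have "norm (- ((e / (2 * (norm b + 1))) *\<^sub>R b)) = e * (norm b / (2 * (norm b + 1)))"
    using e d by simp
  also have "norm b / (2 * (norm b + 1)) < 1" using d nb by (simp add: divide_less_eq, smt (verit))
  then have "e * (norm b / (2 * (norm b + 1))) < e * 1" using e by (intro mult_strict_left_mono)
  finally show ?thesis by simp
qed

theorem proposition4:
  fixes Q :: "'a::polish_space measure set"
    and Y :: "'a \<Rightarrow> real ^ 'd"
  assumes "Q \<noteq> {}" and "Q \<subseteq> borel_probs" and "convex_measures Q"
    and "univ_measurable_fun Y"
    and "NA Q Y"
  shows "\<exists>p\<in>Q. 0 \<in> rel_interior (convex hull (supp_E Y p))
            \<and> affine hull (supp_E Y p) = affine hull (supp_D Y Q)"
proof -
  note Qb = assms(2) and Y = assms(4)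
  define S where "S = (\<Union>q\<in>Q. supp_E Y q)"
  have SE: "\<And>q. q \<in> Q \<Longrightarrow> supp_E Y q \<subseteq> S" unfolding S_def by auto
  have Sne: "S \<noteq> {}" using assms(1) supp_nonempty[of _ Y] Qb Y SE by blast
  have ED: "\<And>q. q \<in> Q \<Longrightarrow> supp_E Y q \<subseteq> supp_D Y Q" unfolding supp_E_def supp_D_def by auto
  have DS: "supp_D Y Q \<subseteq> closure S"
  proof -
    have "\<forall>q\<in>Q. uprob q (Y -` closure S) = 1"
    proof
      fix q assume q: "q \<in> Q"
      have "Y -` (- closure S) \<subseteq> Y -` (- supp_E Y q)" using SE[OF q] closure_subset by blast
      then have "Y -` (- closure S) \<in> null_sets (completion q)"
        using full_supp[of q Y] q Qb Y null_sets_completion_subset by blast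
      then show "uprob q (Y -` closure S) = 1" using uprob1[of q Y "closure S"] q Qb Y by auto
    qed
    then show ?thesis unfolding supp_D_def by auto
  qed
  have PS: "\<forall>x\<in>S. h \<bullet> x = 0" if h: "\<forall>x\<in>S. 0 \<le> h \<bullet> x" for h :: "real^'d"
  proof -
    define N where "N = Y -` {y. h \<bullet> y < 0}"
    have "quasi_surely Q (\<lambda>\<omega>. h \<bullet> Y \<omega> \<ge> 0)"
      unfolding quasi_surely_def
    proof (intro bexI conjI allI impI)
      show "N \<in> univ_measurable_sets" using Y borel_open[OF open_halfspace_lt[of h 0]]
        unfolding N_def univ_measurable_fun_def by blast
      show "\<forall>q\<in>Q. uprob q N = 0"
      proof
        fix q assume q: "q \<in> Q"
        have "N \<subseteq> Y -` (- supp_E Y q)" using h SE[OF q] unfolding N_def by fastforce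
        then have "N \<in> null_sets (completion q)"
          using full_supp[of q Y] q Qb Y null_sets_completion_subset by blast
        then show "uprob q N = 0" unfolding uprob_def by (auto simp: measure_def null_sets_def)
      qed
      fix \<omega> assume "\<omega> \<notin> N" then show "h \<bullet> Y \<omega> \<ge> 0" unfolding N_def by auto
    qed
    then have "quasi_surely Q (\<lambda>\<omega>. h \<bullet> Y \<omega> = 0)" using assms(5) unfolding NA_def by blast
    then obtain N2 where N2: "N2 \<in> univ_measurable_sets" "\<forall>q\<in>Q. uprob q N2 = 0"
      "\<forall>\<omega>. \<omega> \<notin> N2 \<longrightarrow> h \<bullet> Y \<omega> = 0"
      unfolding quasi_surely_def by blast
    show "\<forall>x\<in>S. h \<bullet> x = 0"
    proof
      fix x assume "x \<in> S"
      then obtain q where q: "q \<in> Q" "x \<in> supp_E Y q" unfolding S_def by auto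
      have "N2 \<in> sets (completion q)" using N2(1) q Qb unfolding univ_measurable_sets_def by auto
      then have "N2 \<in> null_sets (completion q)" using uprob0[of q N2] N2(2) q Qb by auto
      moreover have "Y -` (- {y. h \<bullet> y = 0}) \<subseteq> N2" using N2(3) by auto
      ultimately have "Y -` (- {y. h \<bullet> y = 0}) \<in> null_sets (completion q)"
        using null_sets_completion_subset by blast
      then have u: "uprob q (Y -` {y. h \<bullet> y = 0}) = 1"
        using uprob1[of q Y "{y. h \<bullet> y = 0}"] q Qb Y closed_hyperplane[of h 0] by auto
      have "x \<in> {y. h \<bullet> y = 0}" using q(2) u closed_hyperplane[of h 0] unfolding memE by blast
      then show "h \<bullet> x = 0" by simp
    qed
  qed
  have PC: "\<forall>x\<in>convex hull S. h \<bullet> x = 0" if H: "\<forall>x\<in>convex hull S. 0 \<le> h \<bullet> x" for h :: "real^'d"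
  proof -
    have "\<forall>x\<in>S. h \<bullet> x = 0" using PS H hull_subset[of S convex] by blast
    then have "convex hull S \<subseteq> {x. h \<bullet> x = 0}" by (intro hull_minimal) (auto simp: convex_hyperplane)
    then show ?thesis by auto
  qed
  have ri: "0 \<in> rel_interior (convex hull S)"
    using G1[OF convex_convex_hull] PC Sne by auto
  obtain e where e: "e > 0" "ball 0 e \<inter> affine hull S \<subseteq> convex hull S"
    using ri unfolding mem_rel_interior_ball by auto
  have 0: "0 \<in> affine hull S"
    using ri rel_interior_subset convex_hull_subset_affine_hull by blast
  have spanS: "affine hull S = span S" using affine_hull_span_0[OF 0] .
  obtain B where B: "B \<subseteq> S" "\<not> affine_dependent B" "affine hull S = affine hull B"
    using affine_basis_exists by blast
  have fB: "finite B" using aff_independent_finite[OF B(2)] .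
  have "\<forall>b\<in>B. \<exists>F. finite F \<and> F \<subseteq> S \<and> (\<exists>t>0. - (t *\<^sub>R b) \<in> convex hull F)"
  proof
    fix b assume b: "b \<in> B"
    define t where "t = e / (2 * (norm b + 1))"
    have "2 * (norm b + 1) > (0::real)" by (simp add: add_nonneg_pos)
    then have t: "t > 0" using e unfolding t_def by (intro divide_pos_pos)
    have n: "norm (-(t *\<^sub>R b)) < e" using aux_norm[OF e(1), of b] unfolding t_def .
    have "b \<in> span S" using b B(1) span_base by blast
    then have "-(t *\<^sub>R b) \<in> span S" by (simp add: span_neg span_scale)
    then have "-(t *\<^sub>R b) \<in> affine hull S" unfolding spanS .
    moreover have "-(t *\<^sub>R b) \<in> ball 0 e" using n by simp
    ultimately have "-(t *\<^sub>R b) \<in> convex hull S" using e(2) by blast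
    moreover have c: "convex hull S =
      {x. \<exists>T. finite T \<and> T \<subseteq> S \<and> card T \<le> DIM(real^'d) + 1 \<and> x \<in> convex hull T}"
      by (rule caratheodory)
    ultimately obtain F where "finite F" "F \<subseteq> S" "-(t *\<^sub>R b) \<in> convex hull F"
      by blast
    then show "\<exists>F. finite F \<and> F \<subseteq> S \<and> (\<exists>t>0. - (t *\<^sub>R b) \<in> convex hull F)" using t by blast
  qed
  from bchoice[OF this] obtain F where F0: "\<forall>b\<in>B. finite (F b) \<and> F b \<subseteq> S \<and> (\<exists>t>0. - (t *\<^sub>R b) \<in> convex hull (F b))"
    by blast
  have F: "\<And>b. b \<in> B \<Longrightarrow> finite (F b) \<and> F b \<subseteq> S \<and> (\<exists>t>0. - (t *\<^sub>R b) \<in> convex hull (F b))"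
    using F0 by blast
  define T where "T = B \<union> (\<Union>b\<in>B. F b)"
  have fT: "finite T" using fB F unfolding T_def by auto
  have TS: "T \<subseteq> S" using B(1) F unfolding T_def by auto
  have Bne: "B \<noteq> {}"
  proof
    assume "B = {}"
    then have "affine hull S = {}" using B(3) by simp
    moreover have "S \<subseteq> affine hull S" by (rule hull_subset)
    ultimately show False using Sne by blast
  qed
  have Tne: "T \<noteq> {}" using Bne unfolding T_def by auto
  have "\<forall>t\<in>T. \<exists>q\<in>Q. t \<in> supp_E Y q" using TS unfolding S_def by auto
  then obtain p where p: "p \<in> Q" "T \<subseteq> supp_E Y p"
    using finite_mix[OF Qb assms(3) Y fT Tne] by blast
  have Ep: "supp_E Y p \<subseteq> S" using SE[OF p(1)] .
  have spanB: "affine hull S \<subseteq> span B" using B(3) affine_hull_subset_span by auto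
  have ri2: "0 \<in> rel_interior (convex hull (supp_E Y p))"
  proof (rule G1[OF convex_convex_hull])
    show "convex hull supp_E Y p \<noteq> {}" using p(2) Tne by auto
    fix h :: "real^'d" assume H: "\<forall>x\<in>convex hull supp_E Y p. 0 \<le> h \<bullet> x"
    have hb: "h \<bullet> b = 0" if b: "b \<in> B" for b
    proof -
      have bE: "b \<in> supp_E Y p" using b p(2) unfolding T_def by blast
      have "b \<in> convex hull supp_E Y p" using bE by (rule hull_inc)
      then have g: "0 \<le> h \<bullet> b" using H by auto
      obtain t where t: "t > 0" "- (t *\<^sub>R b) \<in> convex hull (F b)" using F[OF b] by blast
      have "F b \<subseteq> supp_E Y p" using b p(2) unfolding T_def by auto
      then have "convex hull (F b) \<subseteq> convex hull supp_E Y p" by (rule hull_mono)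
      then have "- (t *\<^sub>R b) \<in> convex hull supp_E Y p" using t(2) by blast
      then have "0 \<le> h \<bullet> (- (t *\<^sub>R b))" using H by auto
      then have "t * (h \<bullet> b) \<le> 0" by simp
      then have "h \<bullet> b \<le> 0" using t(1) by (simp add: mult_le_0_iff)
      then show ?thesis using g by simp
    qed
    have "B \<subseteq> {x. h \<bullet> x = 0}" using hb by blast
    then have sp: "span B \<subseteq> {x. h \<bullet> x = 0}" using subspace_hyperplane[of h] by (rule span_minimal)
    have c1: "convex hull supp_E Y p \<subseteq> convex hull S" using Ep by (rule hull_mono)
    have c2: "convex hull S \<subseteq> affine hull S" by (rule convex_hull_subset_affine_hull)
    show "\<forall>x\<in>convex hull supp_E Y p. h \<bullet> x = 0"
    proof
      fix x assume "x \<in> convex hull supp_E Y p"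
      then have "x \<in> span B" using c1 c2 spanB by blast
      then show "h \<bullet> x = 0" using sp by blast
    qed
  qed
  have "affine hull supp_E Y p \<subseteq> affine hull supp_D Y Q" using hull_mono[OF ED[OF p(1)]] .
  moreover have "affine hull supp_D Y Q \<subseteq> affine hull supp_E Y p"
  proof -
    have "affine hull supp_D Y Q \<subseteq> affine hull (closure S)" using hull_mono[OF DS] .
    also have "\<dots> = affine hull B" using B(3) by simp
    also have "\<dots> \<subseteq> affine hull supp_E Y p" using p(2) unfolding T_def by (intro hull_mono) auto
    finally show ?thesis .
  qed
  ultimately show ?thesis using p(1) ri2 by blast
qed

end
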